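(* For all integers $m,n\ge 0$, the bubble lattice $\mathrm{Bub}(m,n)$ has order dimension $m+n$.
   Context: For a finite directed graph $G$ without multiple edges, a maximal orthogonal pair is a pair $(X,Y)$ of disjoint vertex subsets with no edge from $X$ to $Y$, maximal for this property; ordered by $(X,Y)\le(X',Y')$ iff $X\subseteq X'$ they form a lattice $L(G)$. Let $X=\{x_1,\dots,x_m\}$, $Y=\{y_1,\dots,y_n\}$ be disjoint alphabets. $\mathrm{Bub}(m,n):=L(G)$ where $G$ has vertex set $X\sqcup Y\sqcup(X\times Y)$ and an edge $l_1\to l_2$ ($l_1\neq l_2$) exactly when: $l_1=(x_s,y_t)$ and $l_2=x_s$; or $l_1=y_t$ and $l_2=(x_s,y_t)$; or $l_1=(x_s,y_t)$, $l_2=(x_{s'},y_{t'})$ with $s\ge s'$ and $t\le t'$ (equivalently, $\mathrm{Bub}(m,n)$ is the extremal lattice with this Galois graph). The order dimension of a poset is the least $d$ such that it embeds as a subposet of $\mathbb R^d$ with the componentwise order. *)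

theory Defs
  imports Complex_Main
begin

definition orth_pair :: "'v set \<Rightarrow> ('v \<Rightarrow> 'v \<Rightarrow> bool) \<Rightarrow> 'v set \<Rightarrow> 'v set \<Rightarrow> bool" where
  "orth_pair V E A B \<longleftrightarrow> A \<subseteq> V \<and> B \<subseteq> V \<and> A \<inter> B = {} \<and> (\<forall>a\<in>A. \<forall>b\<in>B. \<not> E a b)"

definition max_orth_pair :: "'v set \<Rightarrow> ('v \<Rightarrow> 'v \<Rightarrow> bool) \<Rightarrow> 'v set \<Rightarrow> 'v set \<Rightarrow> bool" where
  "max_orth_pair V E A B \<longleftrightarrow> orth_pair V E A B \<and>
     (\<forall>A' B'. orth_pair V E A' B' \<and> A \<subseteq> A' \<and> B \<subseteq> B' \<longrightarrow> A' = A \<and> B' = B)"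

definition L_carrier :: "'v set \<Rightarrow> ('v \<Rightarrow> 'v \<Rightarrow> bool) \<Rightarrow> ('v set \<times> 'v set) set" where
  "L_carrier V E = {(A, B). max_orth_pair V E A B}"

definition L_le :: "('v set \<times> 'v set) \<Rightarrow> ('v set \<times> 'v set) \<Rightarrow> bool" where
  "L_le p q \<longleftrightarrow> fst p \<subseteq> fst q"

definition embeds_in_Rd :: "'a set \<Rightarrow> ('a \<Rightarrow> 'a \<Rightarrow> bool) \<Rightarrow> nat \<Rightarrow> bool" where
  "embeds_in_Rd P le d \<longleftrightarrow>
     (\<exists>f :: 'a \<Rightarrow> nat \<Rightarrow> real. \<forall>x\<in>P. \<forall>y\<in>P. le x y \<longleftrightarrow> (\<forall>i<d. f x i \<le> f y i))"

definition order_dim :: "'a set \<Rightarrow> ('a \<Rightarrow> 'a \<Rightarrow> bool) \<Rightarrow> nat" where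
  "order_dim P le = (LEAST d. embeds_in_Rd P le d)"

datatype bvert = Xv nat | Yv nat | XYv nat nat

definition bub_verts :: "nat \<Rightarrow> nat \<Rightarrow> bvert set" where
  "bub_verts m n = Xv ` {1..m} \<union> Yv ` {1..n} \<union> {XYv s t | s t. s \<in> {1..m} \<and> t \<in> {1..n}}"

fun bub_edge0 :: "bvert \<Rightarrow> bvert \<Rightarrow> bool" where
  "bub_edge0 (XYv s t) (Xv s') = (s = s')"
| "bub_edge0 (Yv t) (XYv s t') = (t = t')"
| "bub_edge0 (XYv s t) (XYv s' t') = (s \<ge> s' \<and> t \<le> t')"
| "bub_edge0 _ _ = False"

definition bub_edge :: "nat \<Rightarrow> nat \<Rightarrow> bvert \<Rightarrow> bvert \<Rightarrow> bool" where
  "bub_edge m n l1 l2 \<longleftrightarrow> l1 \<in> bub_verts m n \<and> l2 \<in> bub_verts m n \<and> l1 \<noteq> l2 \<and> bub_edge0 l1 l2"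

definition Bub :: "nat \<Rightarrow> nat \<Rightarrow> (bvert set \<times> bvert set) set" where
  "Bub m n = L_carrier (bub_verts m n) (bub_edge m n)"

end

theory Submission
  imports Defs
begin

lemma maxI:
  assumes "orth_pair V E A B"
    and "\<And>A' B'. orth_pair V E A' B' \<Longrightarrow> A \<subseteq> A' \<Longrightarrow> B \<subseteq> B' \<Longrightarrow> A' \<subseteq> A \<and> B' \<subseteq> B"
  shows "max_orth_pair V E A B"
  using assms unfolding max_orth_pair_def by blast

lemma max_partition:
  assumes "A \<subseteq> V" "\<And>a b. a \<in> A \<Longrightarrow> b \<in> V \<Longrightarrow> b \<notin> A \<Longrightarrow> \<not> E a b"
  shows "max_orth_pair V E A (V - A)"
  apply (rule maxI)
  using assms unfolding orth_pair_def by blast+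

lemma max_addX:
  assumes "max_orth_pair V E X Y" "u \<in> V" "u \<notin> Y" "\<And>y. y \<in> Y \<Longrightarrow> \<not> E u y"
  shows "u \<in> X"
proof -
  have o: "orth_pair V E X Y" using assms(1) unfolding max_orth_pair_def by blast
  then have "orth_pair V E (insert u X) Y" using assms unfolding orth_pair_def by blast
  then have "insert u X = X" using assms(1) unfolding max_orth_pair_def by blast
  then show ?thesis by blast
qed

lemma bv_X[simp]: "Xv s \<in> bub_verts m n \<longleftrightarrow> 1 \<le> s \<and> s \<le> m"
  unfolding bub_verts_def by auto
lemma bv_Y[simp]: "Yv t \<in> bub_verts m n \<longleftrightarrow> 1 \<le> t \<and> t \<le> n"
  unfolding bub_verts_def by auto
lemma bv_XY[simp]: "XYv s t \<in> bub_verts m n \<longleftrightarrow> 1 \<le> s \<and> s \<le> m \<and> 1 \<le> t \<and> t \<le> n"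
  unfolding bub_verts_def by auto

lemma finite_bv: "finite (bub_verts m n)"
proof -
  have "{XYv s t | s t. s \<in> {1..m} \<and> t \<in> {1..n}} = (\<lambda>(s,t). XYv s t) ` ({1..m} \<times> {1..n})"
    by auto
  then show ?thesis unfolding bub_verts_def by simp
qed

lemma Bub_D:
  assumes "p \<in> Bub m n"
  shows "max_orth_pair (bub_verts m n) (bub_edge m n) (fst p) (snd p)"
  using assms unfolding Bub_def L_carrier_def by auto

lemma mo_orth:
  assumes "max_orth_pair V E X Y"
  shows "X \<subseteq> V" "Y \<subseteq> V" "X \<inter> Y = {}" "\<And>a b. a \<in> X \<Longrightarrow> b \<in> Y \<Longrightarrow> \<not> E a b"
  using assms unfolding max_orth_pair_def orth_pair_def by blast+

lemma L2:
  assumes mo: "max_orth_pair (bub_verts m n) (bub_edge m n) X Y" and u: "XYv s t \<in> X"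
  shows "Xv s \<in> X"
proof -
  have uV: "XYv s t \<in> bub_verts m n" using mo_orth(1)[OF mo] u by blast
  have V: "Xv s \<in> bub_verts m n" using uV by simp
  have "Xv s \<notin> Y"
  proof
    assume "Xv s \<in> Y"
    moreover have "bub_edge m n (XYv s t) (Xv s)" using uV V unfolding bub_edge_def by simp
    ultimately show False using mo_orth(4)[OF mo u] by blast
  qed
  moreover have "\<And>y. y \<in> Y \<Longrightarrow> \<not> bub_edge m n (Xv s) y"
    unfolding bub_edge_def by (case_tac y) auto
  ultimately show ?thesis using max_addX[OF mo V] by blast
qed

lemma L3:
  assumes mo: "max_orth_pair (bub_verts m n) (bub_edge m n) X Y" and u: "XYv s t \<in> X"
    and tt: "t \<le> t'" "t' \<le> n"
  shows "XYv s t' \<in> X"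
proof (cases "t = t'")
  case True then show ?thesis using u by simp
next
  case False
  then have lt: "t < t'" using tt by simp
  have uV: "XYv s t \<in> bub_verts m n" using mo_orth(1)[OF mo] u by blast
  have V: "XYv s t' \<in> bub_verts m n" using uV tt by simp
  have e: "bub_edge m n (XYv s t) (XYv s t')" using uV V lt unfolding bub_edge_def by simp
  have "XYv s t' \<notin> Y" using mo_orth(4)[OF mo u] e by blast
  moreover have "\<not> bub_edge m n (XYv s t') y" if y: "y \<in> Y" for y
  proof
    assume ey: "bub_edge m n (XYv s t') y"
    have yV: "y \<in> bub_verts m n" using ey unfolding bub_edge_def by blast
    show False
    proof (cases y)
      case (Xv s')
      then have "s' = s" using ey unfolding bub_edge_def by simp
      then have "y \<in> X" using L2[OF mo u] Xv by simp
      then show False using y mo_orth(3)[OF mo] by blast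
    next
      case (Yv x)
      then show False using ey unfolding bub_edge_def by simp
    next
      case (XYv s'' t'')
      then have "s'' \<le> s" "t' \<le> t''" using ey unfolding bub_edge_def by auto
      then have "bub_edge m n (XYv s t) y" using XYv uV yV lt unfolding bub_edge_def by auto
      then show False using mo_orth(4)[OF mo u y] by blast
    qed
  qed
  ultimately show ?thesis using max_addX[OF mo V] by blast
qed

definition Cset :: "nat \<Rightarrow> bvert set" where
  "Cset s = {v. v = Xv s \<or> (\<exists>t. v = XYv s t)}"

lemma chain_lemma:
  assumes mo: "max_orth_pair (bub_verts m n) (bub_edge m n) X Y"
    and mo': "max_orth_pair (bub_verts m n) (bub_edge m n) X' Y'"
  shows "X \<inter> Cset s \<subseteq> X' \<inter> Cset s \<or> X' \<inter> Cset s \<subseteq> X \<inter> Cset s"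
proof (rule ccontr)
  assume "\<not> ?thesis"
  then obtain a b where a: "a \<in> X" "a \<notin> X'" "a \<in> Cset s" and b: "b \<in> X'" "b \<notin> X" "b \<in> Cset s"
    by blast
  have aV: "a \<in> bub_verts m n" using a mo_orth(1)[OF mo] by blast
  have bV: "b \<in> bub_verts m n" using b mo_orth(1)[OF mo'] by blast
  show False
  proof (cases "a = Xv s")
    case True
    then obtain t where "b = XYv s t" using b a unfolding Cset_def by blast
    then show False using L2[OF mo'] b a True by blast
  next
    case False
    then obtain t where at: "a = XYv s t" using a unfolding Cset_def by blast
    show False
    proof (cases "b = Xv s")
      case True
      then show False using L2[OF mo] a b at by blast
    next
      case False
      then obtain t' where bt: "b = XYv s t'" using b unfolding Cset_def by blast
      show False
      proof (cases "t \<le> t'")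
        case True
        then show False using L3[OF mo, of s t t'] a b at bt bV by simp
      next
        case False
        then show False using L3[OF mo', of s t' t] a b at bt aV by simp
      qed
    qed
  qed
qed

definition emb :: "nat \<Rightarrow> bvert set \<times> bvert set \<Rightarrow> nat \<Rightarrow> real" where
  "emb m p i = (if i < m then real (card (fst p \<inter> Cset (Suc i)))
     else (if Yv (i - m + 1) \<in> fst p then 1 else 0))"

lemma upper: "embeds_in_Rd (Bub m n) L_le (m + n)"
  unfolding embeds_in_Rd_def
proof (intro exI[of _ "emb m"] ballI)
  fix p q assume p: "p \<in> Bub m n" and q: "q \<in> Bub m n"
  note mp = Bub_D[OF p] and mq = Bub_D[OF q]
  have fp: "finite (fst p)" using mo_orth(1)[OF mp] finite_bv finite_subset by blast
  have fq: "finite (fst q)" using mo_orth(1)[OF mq] finite_bv finite_subset by blast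
  show "L_le p q \<longleftrightarrow> (\<forall>i<m + n. emb m p i \<le> emb m q i)"
  proof
    assume "L_le p q"
    then have sub: "fst p \<subseteq> fst q" unfolding L_le_def by simp
    show "\<forall>i<m + n. emb m p i \<le> emb m q i"
    proof (intro allI impI)
      fix i assume "i < m + n"
      have "card (fst p \<inter> Cset (Suc i)) \<le> card (fst q \<inter> Cset (Suc i))"
        using sub fq by (intro card_mono) auto
      then show "emb m p i \<le> emb m q i" unfolding emb_def using sub by auto
    qed
  next
    assume H: "\<forall>i<m + n. emb m p i \<le> emb m q i"
    have "fst p \<subseteq> fst q"
    proof
      fix u assume u: "u \<in> fst p"
      have uV: "u \<in> bub_verts m n" using u mo_orth(1)[OF mp] by blast
      show "u \<in> fst q"
      proof (cases u)
        case (Yv t)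
        then have t: "1 \<le> t" "t \<le> n" using uV by auto
        define i where "i = m + t - 1"
        have i: "i < m + n" "\<not> i < m" "i - m + 1 = t" using t unfolding i_def by auto
        have "emb m p i \<le> emb m q i" using H i by blast
        then show ?thesis using i u Yv unfolding emb_def by (auto split: if_splits)
      next
        case (Xv s)
        then have s: "1 \<le> s" "s \<le> m" using uV by auto
        define i where "i = s - 1"
        have i: "i < m + n" "i < m" "Suc i = s" using s unfolding i_def by auto
        have "emb m p i \<le> emb m q i" using H i by blast
        then have c: "card (fst p \<inter> Cset s) \<le> card (fst q \<inter> Cset s)"
          using i unfolding emb_def by simp
        have "fst p \<inter> Cset s \<subseteq> fst q \<inter> Cset s"
        proof (rule ccontr)
          assume nc: "\<not> ?thesis"
          then have "fst q \<inter> Cset s \<subset> fst p \<inter> Cset s"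
            using chain_lemma[OF mp mq, of s] by blast
          then have "card (fst q \<inter> Cset s) < card (fst p \<inter> Cset s)"
            using fp by (intro psubset_card_mono) auto
          then show False using c by simp
        qed
        then show ?thesis using u Xv unfolding Cset_def by blast
      next
        case (XYv s t)
        then have s: "1 \<le> s" "s \<le> m" using uV by auto
        define i where "i = s - 1"
        have i: "i < m + n" "i < m" "Suc i = s" using s unfolding i_def by auto
        have "emb m p i \<le> emb m q i" using H i by blast
        then have c: "card (fst p \<inter> Cset s) \<le> card (fst q \<inter> Cset s)"
          using i unfolding emb_def by simp
        have "fst p \<inter> Cset s \<subseteq> fst q \<inter> Cset s"
        proof (rule ccontr)
          assume nc: "\<not> ?thesis"
          then have "fst q \<inter> Cset s \<subset> fst p \<inter> Cset s"
            using chain_lemma[OF mp mq, of s] by blast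
          then have "card (fst q \<inter> Cset s) < card (fst p \<inter> Cset s)"
            using fp by (intro psubset_card_mono) auto
          then show False using c by simp
        qed
        then show ?thesis using u XYv unfolding Cset_def by blast
      qed
    qed
    then show "L_le p q" unfolding L_le_def by simp
  qed
qed

lemma std_lower:
  fixes a b :: "nat \<Rightarrow> 'a"
  assumes inP: "\<And>i. i < k \<Longrightarrow> a i \<in> P \<and> b i \<in> P"
    and ab: "\<And>i j. i < k \<Longrightarrow> j < k \<Longrightarrow> i \<noteq> j \<Longrightarrow> le (a i) (b j)"
    and nab: "\<And>i. i < k \<Longrightarrow> \<not> le (a i) (b i)"
    and emb: "embeds_in_Rd P le d"
  shows "k \<le> d"
proof -
  obtain f :: "'a \<Rightarrow> nat \<Rightarrow> real" where f: "\<forall>x\<in>P. \<forall>y\<in>P. le x y \<longleftrightarrow> (\<forall>i<d. f x i \<le> f y i)"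
    using emb unfolding embeds_in_Rd_def by blast
  have ex: "\<exists>c<d. f (b i) c < f (a i) c" if "i < k" for i
    using f inP[OF that] nab[OF that] by force
  define c where "c i = (SOME c. c < d \<and> f (b i) c < f (a i) c)" for i
  have c: "c i < d \<and> f (b i) (c i) < f (a i) (c i)" if "i < k" for i
    unfolding c_def using someI_ex[OF ex[OF that]] .
  have le': "f (a i) x \<le> f (b j) x" if "i < k" "j < k" "i \<noteq> j" "x < d" for i j x
    using f inP[OF that(1)] inP[OF that(2)] ab[OF that(1-3)] that(4) by blast
  have "inj_on c {..<k}"
  proof (rule inj_onI)
    fix i j assume i: "i \<in> {..<k}" and j: "j \<in> {..<k}" and eq: "c i = c j"
    show "i = j"
    proof (rule ccontr)
      assume ne: "i \<noteq> j"
      have ci: "c i < d" using c i by auto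
      have 1: "f (a i) (c i) \<le> f (b j) (c i)" using le' i j ne ci by auto
      have 2: "f (b j) (c i) < f (a j) (c i)" using c[of j] j eq by auto
      have 3: "f (a j) (c i) \<le> f (b i) (c i)" using le' i j ne ci by auto
      have 4: "f (b i) (c i) < f (a i) (c i)" using c[of i] i by auto
      show False using 1 2 3 4 by linarith
    qed
  qed
  moreover have "c ` {..<k} \<subseteq> {..<d}" using c by auto
  ultimately have "card {..<k} \<le> card {..<d}" by (intro card_inj_on_le) auto
  then show ?thesis by simp
qed


lemma memAx: assumes "1 \<le> s" "s \<le> m"
  shows "({Xv s}, bub_verts m n - {Xv s}) \<in> Bub m n"
  unfolding Bub_def L_carrier_def
  using max_partition[of "{Xv s}" "bub_verts m n" "bub_edge m n"] assms
  by (auto simp: bub_edge_def)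

lemma memBy: assumes "1 \<le> t" "t \<le> n"
  shows "(bub_verts m n - {Yv t}, {Yv t}) \<in> Bub m n"
proof -
  have "max_orth_pair (bub_verts m n) (bub_edge m n) (bub_verts m n - {Yv t})
      (bub_verts m n - (bub_verts m n - {Yv t}))"
    by (rule max_partition) (auto simp: bub_edge_def elim: bub_edge0.elims)
  moreover have "bub_verts m n - (bub_verts m n - {Yv t}) = {Yv t}" using assms by auto
  ultimately show ?thesis unfolding Bub_def L_carrier_def by simp
qed

lemma memAy: assumes "1 \<le> t" "t \<le> n"
  shows "({Yv t}, bub_verts m n - ({Yv t} \<union> {XYv s t | s. True})) \<in> Bub m n"
proof -
  let ?V = "bub_verts m n" and ?Y = "bub_verts m n - ({Yv t} \<union> {XYv s t | s. True})"
  have o: "orth_pair ?V (bub_edge m n) {Yv t} ?Y"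
    unfolding orth_pair_def using assms by (auto simp: bub_edge_def elim: bub_edge0.elims)
  have "max_orth_pair ?V (bub_edge m n) {Yv t} ?Y"
  proof (rule maxI[OF o])
    fix A' B' assume o': "orth_pair ?V (bub_edge m n) A' B'" and s1: "{Yv t} \<subseteq> A'" and s2: "?Y \<subseteq> B'"
    have noXY: "XYv s t \<notin> A'" for s
    proof
      assume h: "XYv s t \<in> A'"
      then have "XYv s t \<in> ?V" using o' unfolding orth_pair_def by blast
      then have sr: "1 \<le> s" "s \<le> m" by auto
      then have "Xv s \<in> B'" using s2 by auto
      moreover have "bub_edge m n (XYv s t) (Xv s)" using sr assms by (simp add: bub_edge_def)
      ultimately show False using h o' unfolding orth_pair_def by blast
    qed
    have noXY2: "XYv s t \<notin> B'" for s
    proof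
      assume h: "XYv s t \<in> B'"
      then have "XYv s t \<in> ?V" using o' unfolding orth_pair_def by blast
      then have sr: "1 \<le> s" "s \<le> m" by auto
      have "bub_edge m n (Yv t) (XYv s t)" using sr assms by (simp add: bub_edge_def)
      then show False using h s1 o' unfolding orth_pair_def by blast
    qed
    show "A' \<subseteq> {Yv t} \<and> B' \<subseteq> ?Y"
    proof
      show "A' \<subseteq> {Yv t}"
      proof
        fix x assume x: "x \<in> A'"
        then have "x \<notin> B'" using o' unfolding orth_pair_def by blast
        then have "x \<notin> ?Y" using s2 by blast
        moreover have "x \<in> ?V" using x o' unfolding orth_pair_def by blast
        ultimately show "x \<in> {Yv t}" using noXY x by auto
      qed
    next
      show "B' \<subseteq> ?Y"
      proof
        fix x assume x: "x \<in> B'"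
        then have "x \<notin> A'" using o' unfolding orth_pair_def by blast
        then have "x \<noteq> Yv t" using s1 by blast
        moreover have "x \<in> ?V" using x o' unfolding orth_pair_def by blast
        ultimately show "x \<in> ?Y" using noXY2 x by auto
      qed
    qed
  qed
  then show ?thesis unfolding Bub_def L_carrier_def by simp
qed

lemma memBx: assumes "1 \<le> s" "s \<le> m"
  shows "(bub_verts m n - Cset s, {Xv s}) \<in> Bub m n"
proof -
  let ?V = "bub_verts m n" and ?X = "bub_verts m n - Cset s"
  have o: "orth_pair ?V (bub_edge m n) ?X {Xv s}"
    unfolding orth_pair_def using assms by (auto simp: bub_edge_def Cset_def elim: bub_edge0.elims)
  have "max_orth_pair ?V (bub_edge m n) ?X {Xv s}"
  proof (rule maxI[OF o])
    fix A' B' assume o': "orth_pair ?V (bub_edge m n) A' B'" and s1: "?X \<subseteq> A'" and s2: "{Xv s} \<subseteq> B'"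
    have noXY: "XYv s t \<notin> A'" for t
    proof
      assume h: "XYv s t \<in> A'"
      then have "XYv s t \<in> ?V" using o' unfolding orth_pair_def by blast
      then have "bub_edge m n (XYv s t) (Xv s)" using assms by (simp add: bub_edge_def)
      then show False using h s2 o' unfolding orth_pair_def by blast
    qed
    have noXY2: "XYv s t \<notin> B'" for t
    proof
      assume h: "XYv s t \<in> B'"
      then have "XYv s t \<in> ?V" using o' unfolding orth_pair_def by blast
      then have tr: "1 \<le> t" "t \<le> n" by auto
      then have "Yv t \<in> A'" using s1 by (auto simp: Cset_def)
      moreover have "bub_edge m n (Yv t) (XYv s t)" using tr assms by (simp add: bub_edge_def)
      ultimately show False using h o' unfolding orth_pair_def by blast
    qed
    show "A' \<subseteq> ?X \<and> B' \<subseteq> {Xv s}"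
    proof
      show "A' \<subseteq> ?X"
      proof
        fix x assume x: "x \<in> A'"
        then have "x \<noteq> Xv s" using s2 o' unfolding orth_pair_def by blast
        moreover have "x \<in> ?V" using x o' unfolding orth_pair_def by blast
        ultimately show "x \<in> ?X" using noXY x by (auto simp: Cset_def)
      qed
    next
      show "B' \<subseteq> {Xv s}"
      proof
        fix x assume x: "x \<in> B'"
        then have "x \<notin> A'" using o' unfolding orth_pair_def by blast
        then have "x \<notin> ?X" using s1 by blast
        moreover have "x \<in> ?V" using x o' unfolding orth_pair_def by blast
        ultimately show "x \<in> {Xv s}" using noXY2 x by (auto simp: Cset_def)
      qed
    qed
  qed
  then show ?thesis unfolding Bub_def L_carrier_def by simp
qed

definition Aelt :: "nat \<Rightarrow> nat \<Rightarrow> nat \<Rightarrow> bvert set \<times> bvert set" where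
  "Aelt m n i = (if i < m then ({Xv (Suc i)}, bub_verts m n - {Xv (Suc i)})
     else ({Yv (i - m + 1)}, bub_verts m n - ({Yv (i - m + 1)} \<union> {XYv s (i - m + 1) | s. True})))"

definition Belt :: "nat \<Rightarrow> nat \<Rightarrow> nat \<Rightarrow> bvert set \<times> bvert set" where
  "Belt m n i = (if i < m then (bub_verts m n - Cset (Suc i), {Xv (Suc i)})
     else (bub_verts m n - {Yv (i - m + 1)}, {Yv (i - m + 1)}))"

lemma lower: assumes "embeds_in_Rd (Bub m n) L_le d" shows "m + n \<le> d"
proof (rule std_lower[where a = "Aelt m n" and b = "Belt m n", OF _ _ _ assms])
  fix i assume i: "i < m + n"
  show "Aelt m n i \<in> Bub m n \<and> Belt m n i \<in> Bub m n"
  proof (cases "i < m")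
    case True
    then show ?thesis unfolding Aelt_def Belt_def using memAx[of "Suc i" m n] memBx[of "Suc i" m n] by simp
  next
    case False
    then show ?thesis unfolding Aelt_def Belt_def using i memAy[of "i - m + 1" n m] memBy[of "i - m + 1" n m] by simp
  qed
next
  fix i j assume i: "i < m + n" and j: "j < m + n" and ne: "i \<noteq> j"
  show "L_le (Aelt m n i) (Belt m n j)"
    unfolding L_le_def Aelt_def Belt_def using i j ne by (auto simp: Cset_def)
next
  fix i assume i: "i < m + n"
  show "\<not> L_le (Aelt m n i) (Belt m n i)"
    unfolding L_le_def Aelt_def Belt_def using i by (auto simp: Cset_def)
qed

theorem proposition4p4:
  fixes m n :: nat
  shows "order_dim (Bub m n) L_le = m + n"
  unfolding order_dim_def
  by (rule Least_equality) (auto intro: upper lower)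

end
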